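(* Let $\mathit{Ds}$ be a declaration table of the trait calculus described in the context, $t$ a trait name and $\mathit{Name}$ a declaration name with $\mathit{Ds}(t)=\mathit{Body}$ and $\mathit{Ds}(\mathit{Name})=\mathit{Body}'$. If $\mathit{Ds};t\vdash\mathit{Body}:\mathit{OK}$ and $\mathit{Body}[\mathtt{makeAbstract}\ m]=\mathit{Body}'$, then $\mathit{Ds};\mathit{Name}\vdash\mathit{Body}':\mathit{OK}$.
   Context: Trait calculus (\textsc{TraitCbC}). A program is a list $\mathit{Ds}$ of declarations $\mathit{Name}=E$ (names unique, so $\mathit{Ds}$ is a map), where $\mathit{Name}$ is a trait name $t$ or class name $C$, and trait expressions are $E::=\mathit{Body}\mid t\mid E+E\mid E[\mathtt{makeAbstract}\ m]$. A body is $\{\mathtt{interface}?\ [\mathit{Cs}]\ \mathit{Ms}\}$ with $\mathit{Cs}$ implemented interface names and $\mathit{Ms}$ a list of methods with distinct names. A method is $\mathit{MH}\ e?;$ (abstract if $e$ is absent) with header $S\ \mathtt{method}\ C\ m(C_1x_1\dots C_nx_n)$; $S$ is a specification with precondition $\mathit{Pre}(S)$ and postcondition $\mathit{Post}(S)$ in a parametric logic supporting a commutative, associative conjunction $\&$ and a transitive implication $\Rightarrow$. Expressions are $e::=x\mid e.m(e_1\dots e_n)\mid\mathtt{new}\ C(e_1\dots e_n)$; fields are emulated by argument-less abstract methods (getters). Verification is assumed sound and modular. Typing judgment $\Gamma\vdash e:C\dashv P\models P'$ (knowledge $P$, obligation $P'$): variables give $\Gamma\vdash x:\Gamma(x)\dashv\mathtt{result}:\Gamma(x)\&\mathtt{result}=x\models\mathit{true}$;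 a call $e_0.m(e_1\dots e_n)$ to a method $S\ \mathtt{method}\ C\ m(C_1x_1\dots C_nx_n)$ of $C_0$, with $\Gamma\vdash e_i:C_i\dashv P_i\models P'_i$, fresh $x'_i$ and $S'=S[\mathtt{this}:=x'_0,x_i:=x'_i]$, has type $C$, knowledge $\mathtt{result}:C\&P_0[\mathtt{result}:=x'_0]\&\dots\&P_n[\mathtt{result}:=x'_n]\&(\mathit{Pre}(S')\Rightarrow\mathit{Post}(S'))$ and obligation $P'_0\&\dots\&P'_n\&\mathit{Pre}(S')$; an object creation $\mathtt{new}\ C(e_1\dots e_n)$, where $C$'s getters are $S_i\ \mathtt{method}\ C_i\ x_i()$, has type $C$, knowledge $\mathtt{result}:C\&\bigwedge_i(P_i[\mathtt{result}:=x'_i]\&(\mathit{Pre}(S'_i)\Rightarrow\mathtt{result}.x_i()=x'_i))$ and obligation $\bigwedge_iP'_i\&\bigwedge_i\mathit{Pre}(S'_i)$ with $S'_i=S_i[\mathtt{this}:=\mathtt{result}]$; subsumption allows replacing the type by a supertype. A concrete method $S\ \mathtt{method}\ C\ m(C_1x_1\dots C_nx_n)\ e;$ satisfies $\mathit{Ds};\mathit{Name}\vdash M:\mathit{OK}$ iff for $\Gamma=\mathtt{this}:\mathit{Name},x_1:C_1,\dots,x_n:C_n$ we have $\Gamma\vdash e:C\dashv P\models P'$ and the verifier proves $\mathit{Ds}\vdash(\Gamma\&\mathit{Pre}(S)\&P)\models(P'\&\mathit{Post}(S))$; abstract methods are always OK; $\mathit{Ds};\mathit{Name}\vdash\mathit{Body}:\mathit{OK}$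 iff all its methods are OK. Body abstraction: $\{[\mathit{Cs}]\ \mathit{Ms}_1\ S\ \mathtt{method}\ C\ m(\dots)\ e?;\ \mathit{Ms}_2\}[\mathtt{makeAbstract}\ m]=\{[\mathit{Cs}]\ \mathit{Ms}_1\ S\ \mathtt{method}\ C\ m(\dots);\ \mathit{Ms}_2\}$, i.e. the implementation of $m$ (if any) is removed while its specification is kept. *)

theory Defs
  imports Main
begin

type_synonym var = string     (* program variables, including ''this'' and ''result'' *)
type_synonym mname = string
type_synonym cname = string

datatype name = Trait string | Class cname

(* Besides the connectives and atoms that the typing
   rules need (x : C, x = y, x.m() = y), arbitrary atoms of the underlying logic are
   represented by FAtom a xs, where xs lists the free variables of the atom. *)
datatype 'a form =
    FTrue
  | FConj "'a form" "'a form"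
  | FImp "'a form" "'a form"
  | FType var name
  | FEq var var
  | FGet var mname var               (* x.m() = y *)
  | FAtom 'a "var list"

fun fvars :: "'a form \<Rightarrow> var set" where
  "fvars FTrue = {}"
| "fvars (FConj p q) = fvars p \<union> fvars q"
| "fvars (FImp p q) = fvars p \<union> fvars q"
| "fvars (FType x c) = {x}"
| "fvars (FEq x y) = {x, y}"
| "fvars (FGet x m y) = {x, y}"
| "fvars (FAtom a xs) = set xs"

fun fsubst :: "(var \<Rightarrow> var) \<Rightarrow> 'a form \<Rightarrow> 'a form" where
  "fsubst \<sigma> FTrue = FTrue"
| "fsubst \<sigma> (FConj p q) = FConj (fsubst \<sigma> p) (fsubst \<sigma> q)"
| "fsubst \<sigma> (FImp p q) = FImp (fsubst \<sigma> p) (fsubst \<sigma> q)"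
| "fsubst \<sigma> (FType x c) = FType (\<sigma> x) c"
| "fsubst \<sigma> (FEq x y) = FEq (\<sigma> x) (\<sigma> y)"
| "fsubst \<sigma> (FGet x m y) = FGet (\<sigma> x) m (\<sigma> y)"
| "fsubst \<sigma> (FAtom a xs) = FAtom a (map \<sigma> xs)"

definition conjs :: "'a form list \<Rightarrow> 'a form" where
  "conjs ps = foldr FConj ps FTrue"

type_synonym 'a spec = "'a form \<times> 'a form"

definition Pre :: "'a spec \<Rightarrow> 'a form" where "Pre S = fst S"
definition Post :: "'a spec \<Rightarrow> 'a form" where "Post S = snd S"

definition spec_subst :: "(var \<Rightarrow> var) \<Rightarrow> 'a spec \<Rightarrow> 'a spec" where
  "spec_subst \<sigma> S = (fsubst \<sigma> (Pre S), fsubst \<sigma> (Post S))"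

definition spec_vars :: "'a spec \<Rightarrow> var set" where
  "spec_vars S = fvars (Pre S) \<union> fvars (Post S)"

datatype expr = Var var | Call expr mname "expr list" | New cname "expr list"

datatype 'a mhead = MH "'a spec" cname mname "(cname \<times> var) list"

fun hd_spec :: "'a mhead \<Rightarrow> 'a spec" where "hd_spec (MH S C m ps) = S"
fun hd_ret :: "'a mhead \<Rightarrow> cname" where "hd_ret (MH S C m ps) = C"
fun hd_name :: "'a mhead \<Rightarrow> mname" where "hd_name (MH S C m ps) = m"
fun hd_params :: "'a mhead \<Rightarrow> (cname \<times> var) list" where "hd_params (MH S C m ps) = ps"

(* method  MH e?;  (abstract iff the body is None) *)
datatype 'a meth = MD "'a mhead" "expr option"

fun m_head :: "'a meth \<Rightarrow> 'a mhead" where "m_head (MD h e) = h"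

record 'a body =
  is_interface :: bool
  impls :: "cname list"
  meths :: "'a meth list"

datatype 'a texpr = EBody "'a body" | ETrait string | EPlus "'a texpr" "'a texpr"
  | EMakeAbstract "'a texpr" mname

(* declaration table Ds: names are unique, so Ds is a (partial) map *)
type_synonym 'a decls = "name \<Rightarrow> 'a texpr option"

(* Body[makeAbstract m] = Body' *)
definition make_abstract :: "'a body \<Rightarrow> mname \<Rightarrow> 'a body \<Rightarrow> bool" where
  "make_abstract b m b' \<longleftrightarrow>
     (\<exists>Ms1 Ms2 h e. meths b = Ms1 @ [MD h e] @ Ms2 \<and> hd_name h = m \<and>
        b' = b\<lparr>meths := Ms1 @ [MD h None] @ Ms2\<rparr>)"

definition methods_of :: "'a decls \<Rightarrow> name \<Rightarrow> 'a meth list" where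
  "methods_of Ds n = (case Ds n of Some (EBody b) \<Rightarrow> meths b | _ \<Rightarrow> [])"

definition getters :: "'a decls \<Rightarrow> cname \<Rightarrow> ('a spec \<times> cname \<times> mname) list" where
  "getters Ds C = [(hd_spec h, hd_ret h, hd_name h).
                     M \<leftarrow> methods_of Ds (Class C), h \<leftarrow> [m_head M],
                     M = MD h None \<and> hd_params h = []]"

definition direct_super :: "'a decls \<Rightarrow> name \<Rightarrow> name \<Rightarrow> bool" where
  "direct_super Ds n n' \<longleftrightarrow>
     (\<exists>b c. Ds n = Some (EBody b) \<and> c \<in> set (impls b) \<and> n' = Class c)"

definition subtype :: "'a decls \<Rightarrow> name \<Rightarrow> name \<Rightarrow> bool" where
  "subtype Ds = (direct_super Ds)\<^sup>*\<^sup>*"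

section \<open>Typing judgment  \<Gamma> \<turnstile> e : C \<stileturn> P \<Turnstile> P'\<close>

definition res :: var where "res = ''result''"
definition this :: var where "this = ''this''"

definition fresh_vars :: "var list \<Rightarrow> (var \<rightharpoonup> name) \<Rightarrow> var set \<Rightarrow> bool" where
  "fresh_vars xs \<Gamma> used \<longleftrightarrow> distinct xs \<and>
     (\<forall>x\<in>set xs. x \<noteq> res \<and> x \<noteq> this \<and> x \<notin> dom \<Gamma> \<and> x \<notin> used)"

definition upd_res :: "var \<Rightarrow> var \<Rightarrow> var" where
  "upd_res x' = (\<lambda>v. if v = res then x' else v)"

inductive typing :: "'a decls \<Rightarrow> (var \<rightharpoonup> name) \<Rightarrow> expr \<Rightarrow> name \<Rightarrow> 'a form \<Rightarrow> 'a form \<Rightarrow> bool"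
  for Ds :: "'a decls" where
  T_Var: "\<Gamma> x = Some C \<Longrightarrow>
     typing Ds \<Gamma> (Var x) C (FConj (FType res C) (FEq res x)) FTrue"
| T_Call: "\<lbrakk> typing Ds \<Gamma> e0 C0 P0 P0';
     MD (MH S C m ps) eo \<in> set (methods_of Ds C0);
     length es = length ps; length Ps = length ps; length Ps' = length ps;
     \<forall>i<length ps. typing Ds \<Gamma> (es ! i) (Class (fst (ps ! i))) (Ps ! i) (Ps' ! i);
     length xs' = length ps;
     fresh_vars (x0' # xs') \<Gamma>
        (fvars P0 \<union> fvars P0' \<union> \<Union>(fvars ` set Ps) \<union> \<Union>(fvars ` set Ps') \<union> spec_vars S
         \<union> set (map snd ps));
     S' = spec_subst (\<lambda>v. if v = this then x0'
                           else (case map_of (zip (map snd ps) xs') v of Some y \<Rightarrow> y | None \<Rightarrow> v)) S \<rbrakk>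
   \<Longrightarrow> typing Ds \<Gamma> (Call e0 m es) (Class C)
         (conjs ([FType res (Class C), fsubst (upd_res x0') P0]
                 @ map (\<lambda>(P, x'). fsubst (upd_res x') P) (zip Ps xs')
                 @ [FImp (Pre S') (Post S')]))
         (conjs ([P0'] @ Ps' @ [Pre S']))"
| T_New: "\<lbrakk> gs = getters Ds C;
     length es = length gs; length Ps = length gs; length Ps' = length gs;
     \<forall>i<length gs. typing Ds \<Gamma> (es ! i) (Class (fst (snd (gs ! i)))) (Ps ! i) (Ps' ! i);
     length xs' = length gs;
     fresh_vars xs' \<Gamma>
        (\<Union>(fvars ` set Ps) \<union> \<Union>(fvars ` set Ps') \<union> \<Union>(spec_vars ` fst ` set gs));
     Ss' = map (\<lambda>g. spec_subst (\<lambda>v. if v = this then res else v) (fst g)) gs \<rbrakk>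
   \<Longrightarrow> typing Ds \<Gamma> (New C es) (Class C)
         (conjs (FType res (Class C) #
                 map (\<lambda>i. FConj (fsubst (upd_res (xs' ! i)) (Ps ! i))
                               (FImp (Pre (Ss' ! i)) (FGet res (snd (snd (gs ! i))) (xs' ! i))))
                     [0..<length gs]))
         (conjs (Ps' @ map Pre Ss'))"
| T_Sub: "\<lbrakk> typing Ds \<Gamma> e C P P'; subtype Ds C C' \<rbrakk> \<Longrightarrow> typing Ds \<Gamma> e C' P P'"

(* The verifier:  V Ds P Q  stands for  Ds \<turnstile> P \<Turnstile> Q. *)
type_synonym 'a verifier = "'a decls \<Rightarrow> 'a form \<Rightarrow> 'a form \<Rightarrow> bool"

fun method_ok :: "'a verifier \<Rightarrow> 'a decls \<Rightarrow> name \<Rightarrow> 'a meth \<Rightarrow> bool" where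
  "method_ok V Ds N (MD h None) = True"
| "method_ok V Ds N (MD (MH S C m ps) (Some e)) =
     (let \<Gamma>l = (this, N) # map (\<lambda>(Ci, xi). (xi, Class Ci)) ps;
          \<Gamma>f = conjs (map (\<lambda>(x, T). FType x T) \<Gamma>l)
      in \<exists>P P'. typing Ds (map_of \<Gamma>l) e (Class C) P P' \<and>
               V Ds (conjs [\<Gamma>f, Pre S, P]) (conjs [P', Post S]))"

(* Ds; Name \<turnstile> Body : OK *)
definition body_ok :: "'a verifier \<Rightarrow> 'a decls \<Rightarrow> name \<Rightarrow> 'a body \<Rightarrow> bool" where
  "body_ok V Ds N b \<longleftrightarrow> (\<forall>M\<in>set (meths b). method_ok V Ds N M)"

definition same_iface :: "'a decls \<Rightarrow> name \<Rightarrow> name \<Rightarrow> bool" where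
  "same_iface Ds A B \<longleftrightarrow> (\<exists>b1 b2. Ds A = Some (EBody b1) \<and> Ds B = Some (EBody b2) \<and>
      impls b1 = impls b2 \<and> map m_head (meths b1) = map m_head (meths b2))"

fun tsim :: "name \<Rightarrow> name \<Rightarrow> 'a form \<Rightarrow> 'a form \<Rightarrow> bool" where
  "tsim A B (FConj p q) (FConj p' q') = (tsim A B p p' \<and> tsim A B q q')"
| "tsim A B (FImp p q) (FImp p' q') = (tsim A B p p' \<and> tsim A B q q')"
| "tsim A B (FType x C) (FType y D) =
     (x = y \<and> (C = D \<or> (C = A \<and> D = B) \<or> (C = B \<and> D = A)))"
| "tsim A B p q = (p = q)"

(* Modularity: the verifier reasons about types only through their interfaces
   (implemented interfaces and method specifications), never through implementations;
   hence types with the same interface are interchangeable in verification goals. *)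
definition modular :: "'a verifier \<Rightarrow> bool" where
  "modular V \<longleftrightarrow> (\<forall>Ds A B P Q P2 Q2. same_iface Ds A B \<longrightarrow> tsim A B P P2 \<longrightarrow>
       tsim A B Q Q2 \<longrightarrow> V Ds P Q \<longrightarrow> V Ds P2 Q2)"

end

theory Submission
  imports Defs
begin

lemma tsim_refl: "tsim A B p p"
  by (induction p) auto

lemma tsim_fvars: "tsim A B p q \<Longrightarrow> fvars p = fvars q"
  by (induction A B p q rule: tsim.induct) auto

lemma tsim_fsubst: "tsim A B p q \<Longrightarrow> tsim A B (fsubst \<sigma> p) (fsubst \<sigma> q)"
  by (induction A B p q rule: tsim.induct) auto

lemma tsim_conjs: "list_all2 (tsim A B) ps qs \<Longrightarrow> tsim A B (conjs ps) (conjs qs)"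
  by (induction rule: list_all2_induct) (auto simp: conjs_def)

lemma tsim_fvars_list: "list_all2 (tsim A B) ps qs \<Longrightarrow> \<Union>(fvars ` set ps) = \<Union>(fvars ` set qs)"
  by (induction rule: list_all2_induct) (auto simp: tsim_fvars)

lemma list_all2_refl_tsim: "list_all2 (tsim A B) xs xs"
  by (simp add: list_all2_refl tsim_refl)

lemma same_iface_meth:
  assumes "same_iface Ds A B" "MD h eo \<in> set (methods_of Ds A)"
  shows "\<exists>eo'. MD h eo' \<in> set (methods_of Ds B)"
proof -
  obtain b1 b2 where d: "Ds A = Some (EBody b1)" "Ds B = Some (EBody b2)"
    "map m_head (meths b1) = map m_head (meths b2)"
    using assms(1) unfolding same_iface_def by blast
  have "MD h eo \<in> set (meths b1)" using assms(2) d by (simp add: methods_of_def)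
  then have "h \<in> set (map m_head (meths b1))"
    by (metis image_eqI list.set_map m_head.simps)
  then have "h \<in> set (map m_head (meths b2))" using d by simp
  then obtain M where M: "M \<in> set (meths b2)" "m_head M = h" by auto
  obtain h' e' where "M = MD h' e'" by (cases M)
  then show ?thesis using M d by (auto simp: methods_of_def)
qed

lemma same_iface_sub:
  assumes "same_iface Ds A B" "subtype Ds A C" "C \<noteq> A"
  shows "subtype Ds B C"
proof -
  obtain b1 b2 where d: "Ds A = Some (EBody b1)" "Ds B = Some (EBody b2)"
    "impls b1 = impls b2"
    using assms(1) unfolding same_iface_def by blast
  from assms(2,3) obtain y where y: "direct_super Ds A y" "subtype Ds y C"
    unfolding subtype_def by (metis converse_rtranclpE)
  have "direct_super Ds B y" using y(1) d unfolding direct_super_def by auto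
  then show ?thesis using y(2) unfolding subtype_def
    by (meson converse_rtranclp_into_rtranclp)
qed

lemma args_swap:
  assumes h: "\<forall>i<n. typing Ds \<Gamma> (es!i) (Class (K i)) (Ps!i) (Ps'!i) \<and>
     (\<forall>x. (\<forall>xa. x xa = F (\<Gamma> xa)) \<longrightarrow> (\<exists>C2 P2 P2'. typing Ds x (es!i) C2 P2 P2' \<and>
        (C2 = Class (K i) \<or> Class (K i) = A \<and> C2 = B) \<and> tsim A B (Ps!i) P2 \<and> tsim A B (Ps'!i) P2'))"
    and g: "\<forall>xa. \<Gamma>' xa = F (\<Gamma> xa)" and nA: "\<forall>c. A \<noteq> Class c"
    and l: "length Ps = n" "length Ps' = n"
  shows "\<exists>Qs Qs'. length Qs = n \<and> length Qs' = n \<and>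
     (\<forall>i<n. typing Ds \<Gamma>' (es!i) (Class (K i)) (Qs!i) (Qs'!i)) \<and>
     list_all2 (tsim A B) Ps Qs \<and> list_all2 (tsim A B) Ps' Qs'"
proof -
  have "\<forall>i. \<exists>Q. i < n \<longrightarrow> typing Ds \<Gamma>' (es!i) (Class (K i)) (fst Q) (snd Q) \<and>
     tsim A B (Ps!i) (fst Q) \<and> tsim A B (Ps'!i) (snd Q)"
  proof
    fix i
    show "\<exists>Q. i < n \<longrightarrow> typing Ds \<Gamma>' (es!i) (Class (K i)) (fst Q) (snd Q) \<and>
     tsim A B (Ps!i) (fst Q) \<and> tsim A B (Ps'!i) (snd Q)"
    proof (cases "i < n")
      case True
      then obtain C2 P2 P2' where "typing Ds \<Gamma>' (es!i) C2 P2 P2'"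
        "C2 = Class (K i) \<or> Class (K i) = A \<and> C2 = B" "tsim A B (Ps!i) P2" "tsim A B (Ps'!i) P2'"
        using h g by blast
      then show ?thesis using nA by (intro exI[of _ "(P2, P2')"]) auto
    qed simp
  qed
  then obtain f where f: "\<forall>i<n. typing Ds \<Gamma>' (es!i) (Class (K i)) (fst (f i)) (snd (f i)) \<and>
     tsim A B (Ps!i) (fst (f i)) \<and> tsim A B (Ps'!i) (snd (f i))"
    by metis
  show ?thesis
    apply (rule exI[of _ "map (\<lambda>i. fst (f i)) [0..<n]"])
    apply (rule exI[of _ "map (\<lambda>i. snd (f i)) [0..<n]"])
    using f l by (auto simp: list_all2_conv_all_nth)
qed

lemma map2_tsim: "list_all2 (tsim A B) Ps Qs \<Longrightarrow>
  list_all2 (tsim A B) (map2 (\<lambda>P x'. fsubst (upd_res x') P) Ps xs')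
     (map2 (\<lambda>P x'. fsubst (upd_res x') P) Qs xs')"
proof (induction arbitrary: xs' rule: list_all2_induct)
  case (Cons x xs y ys)
  then show ?case by (cases xs') (auto simp: tsim_fsubst)
qed simp

lemma fresh_vars_dom: "dom \<Gamma> = dom \<Gamma>' \<Longrightarrow> fresh_vars xs \<Gamma> U = fresh_vars xs \<Gamma>' U"
  by (simp add: fresh_vars_def)

lemma typing_swap:
  assumes "typing Ds \<Gamma> e C P P'"
    and "same_iface Ds A B" and "\<forall>c. A \<noteq> Class c"
    and "\<forall>x. \<Gamma>' x = map_option (\<lambda>T. if T = A then B else T) (\<Gamma> x)"
  shows "\<exists>C2 P2 P2'. typing Ds \<Gamma>' e C2 P2 P2' \<and> (C2 = C \<or> (C = A \<and> C2 = B))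
           \<and> tsim A B P P2 \<and> tsim A B P' P2'"
  using assms(1,4)
proof (induction arbitrary: \<Gamma>' rule: typing.induct)
  case (T_Var \<Gamma> x C)
  let ?C2 = "if C = A then B else C"
  have "typing Ds \<Gamma>' (Var x) ?C2 (FConj (FType res ?C2) (FEq res x)) FTrue"
  proof (rule typing.T_Var)
    have "\<Gamma>' x = map_option (\<lambda>T. if T = A then B else T) (\<Gamma> x)" using T_Var.prems by blast
    then show "\<Gamma>' x = Some ?C2" using T_Var by simp
  qed
  then show ?case by (intro exI[of _ ?C2] exI conjI) (auto simp: tsim_refl)
next
  case (T_Call \<Gamma> e0 C0 P0 P0' S C m ps eo es Ps Ps' xs' x0' S')
  have dom: "dom \<Gamma> = dom \<Gamma>'" using T_Call.prems by (auto simp: dom_def)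
  from T_Call.IH(1)[OF T_Call.prems] obtain C0' Q0 Q0' where h0: "typing Ds \<Gamma>' e0 C0' Q0 Q0'"
    "C0' = C0 \<or> C0 = A \<and> C0' = B" "tsim A B P0 Q0" "tsim A B P0' Q0'" by blast
  obtain eo' where meth: "MD (MH S C m ps) eo' \<in> set (methods_of Ds C0')"
    using h0(2) T_Call.hyps(2) same_iface_meth[OF assms(2)] by blast
  obtain Qs Qs' where qs: "length Qs = length ps" "length Qs' = length ps"
     "\<forall>i<length ps. typing Ds \<Gamma>' (es!i) (Class (fst (ps ! i))) (Qs!i) (Qs'!i)"
     "list_all2 (tsim A B) Ps Qs" "list_all2 (tsim A B) Ps' Qs'"
    using args_swap[where K="\<lambda>i. fst (ps ! i)", OF T_Call.IH(2) T_Call.prems assms(3) T_Call.hyps(4,5)]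
    by blast
  have fr: "fresh_vars (x0' # xs') \<Gamma>'
        (fvars Q0 \<union> fvars Q0' \<union> \<Union>(fvars ` set Qs) \<union> \<Union>(fvars ` set Qs') \<union> spec_vars S
         \<union> set (map snd ps))"
    using T_Call.hyps(7) fresh_vars_dom[OF dom] tsim_fvars[OF h0(3)] tsim_fvars[OF h0(4)]
      tsim_fvars_list[OF qs(4)] tsim_fvars_list[OF qs(5)] by simp
  have ty: "typing Ds \<Gamma>' (Call e0 m es) (Class C)
         (conjs ([FType res (Class C), fsubst (upd_res x0') Q0]
                 @ map (\<lambda>(P, x'). fsubst (upd_res x') P) (zip Qs xs')
                 @ [FImp (Pre S') (Post S')]))
         (conjs ([Q0'] @ Qs' @ [Pre S']))"
    by (rule typing.T_Call[OF h0(1) meth T_Call.hyps(3) qs(1,2,3) T_Call.hyps(6) fr T_Call.hyps(8)])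
  show ?case
    apply (rule exI[of _ "Class C"], rule exI, rule exI, rule conjI, rule ty)
    apply (intro conjI tsim_conjs list_all2_appendI)
    using h0 qs map2_tsim[OF qs(4)] by (auto simp: tsim_refl tsim_fsubst)
next
  case (T_New gs C es Ps Ps' \<Gamma> xs' Ss')
  have dom: "dom \<Gamma> = dom \<Gamma>'" using T_New.prems by (auto simp: dom_def)
  obtain Qs Qs' where qs: "length Qs = length gs" "length Qs' = length gs"
     "\<forall>i<length gs. typing Ds \<Gamma>' (es!i) (Class (fst (snd (gs ! i)))) (Qs!i) (Qs'!i)"
     "list_all2 (tsim A B) Ps Qs" "list_all2 (tsim A B) Ps' Qs'"
    using args_swap[where K="\<lambda>i. fst (snd (gs ! i))", OF T_New.IH T_New.prems assms(3) T_New.hyps(3,4)]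
    by blast
  have fr: "fresh_vars xs' \<Gamma>'
        (\<Union>(fvars ` set Qs) \<union> \<Union>(fvars ` set Qs') \<union> \<Union>(spec_vars ` fst ` set gs))"
    using T_New.hyps(6) fresh_vars_dom[OF dom]
      tsim_fvars_list[OF qs(4)] tsim_fvars_list[OF qs(5)] by simp
  have ty: "typing Ds \<Gamma>' (New C es) (Class C)
         (conjs (FType res (Class C) #
                 map (\<lambda>i. FConj (fsubst (upd_res (xs' ! i)) (Qs ! i))
                               (FImp (Pre (Ss' ! i)) (FGet res (snd (snd (gs ! i))) (xs' ! i))))
                     [0..<length gs]))
         (conjs (Qs' @ map Pre Ss'))"
    by (rule typing.T_New[OF T_New.hyps(1,2) qs(1,2,3) T_New.hyps(5) fr T_New.hyps(7)])
  have l2: "list_all2 (tsim A B)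
     (map (\<lambda>i. FConj (fsubst (upd_res (xs' ! i)) (Ps ! i))
                (FImp (Pre (Ss' ! i)) (FGet res (snd (snd (gs ! i))) (xs' ! i)))) [0..<length gs])
     (map (\<lambda>i. FConj (fsubst (upd_res (xs' ! i)) (Qs ! i))
                (FImp (Pre (Ss' ! i)) (FGet res (snd (snd (gs ! i))) (xs' ! i)))) [0..<length gs])"
    using qs(1,4) by (auto simp: list_all2_conv_all_nth tsim_fsubst tsim_refl)
  show ?case
    apply (rule exI[of _ "Class C"], rule exI, rule exI, rule conjI, rule ty)
    apply (intro conjI tsim_conjs list_all2_appendI list_all2_Cons)
    using qs l2 by (auto simp: tsim_refl list_all2_refl_tsim)
next
  case (T_Sub \<Gamma> e C P P' C')
  from T_Sub.IH[OF T_Sub.prems] obtain C2 P2 P2' where h: "typing Ds \<Gamma>' e C2 P2 P2'" "C2 = C \<or> (C = A \<and> C2 = B)"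
    "tsim A B P P2" "tsim A B P' P2'" by blast
  show ?case
  proof (cases "C2 = C")
    case True
    then show ?thesis using h T_Sub(2) typing.T_Sub by blast
  next
    case False
    then have CA: "C = A" "C2 = B" using h(2) by auto
    show ?thesis
    proof (cases "C' = A")
      case True
      then show ?thesis using h CA by blast
    next
      case False
      then have "subtype Ds B C'" using same_iface_sub[OF assms(2)] T_Sub(2) CA by blast
      then show ?thesis using h CA typing.T_Sub by blast
    qed
  qed
qed

lemma map_of_params:
  assumes "\<forall>c. A \<noteq> Class c"
  shows "map_of (map (\<lambda>(Ci, xi). (xi, Class Ci)) ps) x =
    map_option (\<lambda>T. if T = A then B else T) (map_of (map (\<lambda>(Ci, xi). (xi, Class Ci)) ps) x)"
  using assms by (induction ps) auto

lemma method_swap: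
  assumes mod: "modular V" and si: "same_iface Ds A B" and nA: "\<forall>c. A \<noteq> Class c"
    and ok: "method_ok V Ds A M"
  shows "method_ok V Ds B M"
proof -
  obtain h eo where M: "M = MD h eo" by (cases M)
  obtain S C m ps where h: "h = MH S C m ps" by (cases h)
  show ?thesis
  proof (cases eo)
    case None
    then show ?thesis using M by simp
  next
    case (Some e)
    let ?G = "(this, A) # map (\<lambda>(Ci, xi). (xi, Class Ci)) ps"
    let ?G' = "(this, B) # map (\<lambda>(Ci, xi). (xi, Class Ci)) ps"
    from ok obtain P P' where t: "typing Ds (map_of ?G) e (Class C) P P'"
      and v: "V Ds (conjs [conjs (map (\<lambda>(x, T). FType x T) ?G), Pre S, P]) (conjs [P', Post S])"
      using M h Some by (auto simp: Let_def)
    have g: "\<forall>x. map_of ?G' x = map_option (\<lambda>T. if T = A then B else T) (map_of ?G x)"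
      by (simp, metis map_of_params[OF nA])
    obtain C2 P2 P2' where t2: "typing Ds (map_of ?G') e C2 P2 P2'"
      "C2 = Class C \<or> Class C = A \<and> C2 = B" "tsim A B P P2" "tsim A B P' P2'"
      using typing_swap[OF t si nA g] by blast
    have c2: "C2 = Class C" using t2(2) nA by auto
    have "list_all2 (tsim A B) (map (\<lambda>(x, T). FType x T) ?G) (map (\<lambda>(x, T). FType x T) ?G')"
      by (simp add: list_all2_refl_tsim)
    then have "tsim A B (conjs [conjs (map (\<lambda>(x, T). FType x T) ?G), Pre S, P])
                        (conjs [conjs (map (\<lambda>(x, T). FType x T) ?G'), Pre S, P2])"
      using t2(3) tsim_conjs[OF \<open>list_all2 _ _ _\<close>] by (intro tsim_conjs) (auto simp: tsim_refl)
    moreover have "tsim A B (conjs [P', Post S]) (conjs [P2', Post S])"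
      using t2(4) by (intro tsim_conjs) (auto simp: tsim_refl)
    ultimately have "V Ds (conjs [conjs (map (\<lambda>(x, T). FType x T) ?G'), Pre S, P2]) (conjs [P2', Post S])"
      using mod si v unfolding modular_def by blast
    then show ?thesis using M h Some t2(1) c2 by (auto simp: Let_def)
  qed
qed

theorem lemma4p7:
  fixes V :: "'a verifier" and Ds :: "'a decls" and t :: string and N :: name
    and b b' :: "'a body" and m :: mname
  assumes "modular V"
    and "Ds (Trait t) = Some (EBody b)"
    and "Ds N = Some (EBody b')"
    and "body_ok V Ds (Trait t) b"
    and "make_abstract b m b'"
  shows "body_ok V Ds N b'"
proof -
  obtain Ms1 Ms2 h e where mk: "meths b = Ms1 @ [MD h e] @ Ms2"
      "b' = b\<lparr>meths := Ms1 @ [MD h None] @ Ms2\<rparr>"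
    using assms(5) unfolding make_abstract_def by blast
  have si: "same_iface Ds (Trait t) N"
    unfolding same_iface_def using assms(2,3) mk by auto
  have nA: "\<forall>c. Trait t \<noteq> Class c" by simp
  show ?thesis unfolding body_ok_def
  proof
    fix M assume "M \<in> set (meths b')"
    then have "M \<in> set (meths b) \<or> M = MD h None" using mk by auto
    then show "method_ok V Ds N M"
    proof
      assume "M \<in> set (meths b)"
      then have "method_ok V Ds (Trait t) M" using assms(4) unfolding body_ok_def by blast
      then show ?thesis using method_swap[OF assms(1) si nA] by blast
    qed simp
  qed
qed

end
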